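(* Let $\gamma>0$ be such that $\sum_{k=1}^{N-1}\frac1{\nu_{k,N}}\leq\gamma$ for every $N\in\mathbb N$. Then for every $N\in\mathbb N$ and every $x\in\mathbb R^N$, $\langle x,K_Nx\rangle\geq\frac1{\gamma}N\sup_k|x_k-\overline x|^2$.
   Context: Fix $\mu>1$. For $N\in\mathbb N$, $K_N:\mathbb R^N\to\mathbb R^N$ is $(K_Nx)_k=\frac{\mu}{4\sin^2(\pi/N)}(2x_k-x_{k+1}-x_{k-1})$ with $x_{N+1}:=x_1$, $x_0:=x_N$; $\langle\cdot,\cdot\rangle$ is the Euclidean scalar product; $\overline x=\frac1N\sum_kx_k$; $\nu_{k,N}=\mu\frac{\sin^2(k\pi/N)}{\sin^2(\pi/N)}$, $k=0,\dots,N-1$, are the eigenvalues of $K_N$. *)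

theory Defs
  imports Complex_Main
begin

text \<open>Vectors in R^N are represented as functions nat => real, indices 0..N-1
  (paper indices 1..N shifted by one); cyclic neighbours via mod N.\<close>

definition KN :: "real \<Rightarrow> nat \<Rightarrow> (nat \<Rightarrow> real) \<Rightarrow> nat \<Rightarrow> real" where
  "KN \<mu> N x k = \<mu> / (4 * (sin (pi / real N))^2)
      * (2 * x k - x ((k + 1) mod N) - x ((k + N - 1) mod N))"

definition inner_N :: "nat \<Rightarrow> (nat \<Rightarrow> real) \<Rightarrow> (nat \<Rightarrow> real) \<Rightarrow> real" where
  "inner_N N x y = (\<Sum>k<N. x k * y k)"

definition mean_N :: "nat \<Rightarrow> (nat \<Rightarrow> real) \<Rightarrow> real" where
  "mean_N N x = (\<Sum>k<N. x k) / real N"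

definition nu :: "real \<Rightarrow> nat \<Rightarrow> nat \<Rightarrow> real" where
  "nu \<mu> k N = \<mu> * (sin (real k * pi / real N))^2 / (sin (pi / real N))^2"

end

theory Submission
  imports Defs "HOL-Analysis.Convex"
begin

definition w :: "nat \<Rightarrow> complex" where "w N = cis (2*pi/real N)"

lemma w_pow: "w N ^ n = cis (2*pi*real n/real N)"
  unfolding w_def DeMoivre by (simp add: field_simps)

lemma w_N: "N \<ge> 1 \<Longrightarrow> w N ^ N = 1"
  by (simp add: w_pow)

lemma w_pow_mod: assumes "N \<ge> 1" shows "w N ^ ((a mod N) * k) = w N ^ (a * k)"
proof -
  have e: "a * k = N * (a div N * k) + (a mod N) * k"
    by (metis add_mult_distrib div_mult_mod_eq mult.assoc mult.commute)
  have "w N ^ (a * k) = (w N ^ N) ^ (a div N * k) * w N ^ ((a mod N) * k)"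
    by (subst e, simp only: power_add power_mult)
  then show ?thesis using w_N[OF assms] by simp
qed

lemma norm_w_pow: "norm (w N ^ n) = 1" by (simp add: w_pow)

lemma orth:
  assumes N: "N \<ge> 1" and "l < N" "j < N"
  shows "(\<Sum>k<N. w N ^ (l*k) * cnj (w N) ^ (j*k)) = (if l = j then of_nat N else 0)"
proof -
  define q where "q = cis (2*pi*(real l - real j)/real N)"
  have t: "w N ^ (l*k) * cnj (w N) ^ (j*k) = q ^ k" for k
    unfolding q_def w_def cis_cnj DeMoivre cis_mult
    by (rule arg_cong[where f=cis]) (simp add: diff_divide_distrib algebra_simps)
  have sq: "(\<Sum>k<N. w N ^ (l*k) * cnj (w N) ^ (j*k)) = (\<Sum>k<N. q ^ k)" by (simp only: t)
  show ?thesis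
  proof (cases "l = j")
    case True
    then show ?thesis unfolding sq by (simp add: q_def)
  next
    case False
    have qN: "q ^ N = 1" unfolding q_def DeMoivre
    proof -
      have "real N * (2 * pi * (real l - real j) / real N) = 2 * pi * of_int (int l - int j)"
        using N by (simp add: field_simps)
      then show "cis (real N * (2 * pi * (real l - real j) / real N)) = 1"
        by (metis Ints_of_int cis_multiple_2pi)
    qed
    have q1: "q \<noteq> 1"
    proof
      assume "q = 1"
      then have "cos (2*pi*(real l - real j)/real N) = 1" unfolding q_def
        by (metis cis.sel(1) one_complex.sel(1))
      then obtain n :: int where n: "2*pi*(real l - real j)/real N = real_of_int n * 2 * pi"
        using cos_one_2pi_int by blast
      then have "2*pi*(real l - real j) = 2*pi*(real_of_int n * real N)" using N by (simp add: field_simps)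
      then have "real l - real j = real_of_int n * real N" using pi_gt_zero
        by simp
      then have "real_of_int (int l - int j) = real_of_int (n * int N)" by simp
      then have "int l - int j = n * int N" by (simp only: of_int_eq_iff)
      moreover have "\<bar>int l - int j\<bar> < int N" using assms by auto
      ultimately have "\<bar>n\<bar> * int N < 1 * int N" by (simp add: abs_mult)
      then have "\<bar>n\<bar> < 1" by (rule mult_right_less_imp_less) simp
      then have "n = 0" by simp
      then show False using \<open>int l - int j = n * int N\<close> False by simp
    qed
    have "(\<Sum>k<N. w N ^ (l*k) * cnj (w N) ^ (j*k)) = (\<Sum>k<N. q ^ k)" by (simp add: t)
    also have "\<dots> = 0" using geometric_sum[OF q1] qN by simp
    finally show ?thesis using False by simp
  qed
qed

lemma mod_pred_succ: "(N::nat) \<ge> 1 \<Longrightarrow> j < N \<Longrightarrow> ((j+N-1) mod N + 1) mod N = j"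
proof -
  assume a: "N \<ge> 1" "j < N"
  have "((j+N-1) mod N + 1) mod N = (j+N-1+1) mod N" by (rule mod_add_left_eq)
  also have "j+N-1+1 = j + N" using a by simp
  finally show ?thesis using a by simp
qed

lemma mod_succ_pred: "(N::nat) \<ge> 1 \<Longrightarrow> j < N \<Longrightarrow> ((j+1) mod N + N - 1) mod N = j"
proof -
  assume a: "N \<ge> 1" "j < N"
  have "((j+1) mod N + N - 1) mod N = ((j+1) mod N + (N - 1)) mod N" using a by simp
  also have "\<dots> = (j + 1 + (N - 1)) mod N" by (simp add: mod_add_left_eq)
  also have "j + 1 + (N - 1) = j + N" using a by simp
  finally show ?thesis using a by simp
qed

lemma bij_pred: assumes "(N::nat) \<ge> 1" shows "bij_betw (\<lambda>j. (j+N-1) mod N) {..<N} {..<N}"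
proof (rule bij_betw_byWitness[where f'="\<lambda>j. (j+1) mod N"])
  show "\<forall>a\<in>{..<N}. ((a+N-1) mod N + 1) mod N = a" using mod_pred_succ[OF assms] by blast
  show "\<forall>a'\<in>{..<N}. ((a'+1) mod N + N - 1) mod N = a'" using mod_succ_pred[OF assms] by blast
  show "(\<lambda>j. (j+N-1) mod N) ` {..<N} \<subseteq> {..<N}" using assms by auto
  show "(\<lambda>j. (j+1) mod N) ` {..<N} \<subseteq> {..<N}" using assms by auto
qed

lemma sum_shift: "(N::nat) \<ge> 1 \<Longrightarrow> (\<Sum>j<N. f ((j+N-1) mod N)) = (\<Sum>j<N. f j)"
  using sum.reindex_bij_betw[OF bij_pred, of N f] by simp

lemma sum_shift2: assumes "(N::nat) \<ge> 1"
  shows "(\<Sum>j<N. g j ((j+1) mod N)) = (\<Sum>j<N. g ((j+N-1) mod N) j)"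
proof -
  have "(\<Sum>j<N. g ((j+N-1) mod N) j) = (\<Sum>j<N. (\<lambda>m. g m ((m+1) mod N)) ((j+N-1) mod N))"
    using assms by (intro sum.cong refl) (metis mod_pred_succ lessThan_iff)
  also have "\<dots> = (\<Sum>j<N. g j ((j+1) mod N))" using sum_shift[OF assms, of "\<lambda>m. g m ((m+1) mod N)"] by simp
  finally show ?thesis by simp
qed

lemma inner_K: assumes N: "N \<ge> 1"
  shows "inner_N N x (KN \<mu> N x) = \<mu> / (4 * (sin (pi / real N))^2) * (\<Sum>j<N. (x j - x ((j+N-1) mod N))^2)"
proof -
  define c where "c = \<mu> / (4 * (sin (pi / real N))^2)"
  have s1: "(\<Sum>j<N. x j * x ((j+1) mod N)) = (\<Sum>j<N. x ((j+N-1) mod N) * x j)"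
    using sum_shift2[OF N, of "\<lambda>a b. x a * x b"] by simp
  have s2: "(\<Sum>j<N. (x ((j+N-1) mod N))^2) = (\<Sum>j<N. (x j)^2)"
    using sum_shift[OF N, of "\<lambda>a. (x a)^2"] by simp
  have "inner_N N x (KN \<mu> N x) = c * (2 * (\<Sum>j<N. (x j)^2) - (\<Sum>j<N. x j * x ((j+1) mod N)) - (\<Sum>j<N. x ((j+N-1) mod N) * x j))"
    unfolding inner_N_def KN_def c_def[symmetric]
    by (simp add: sum_distrib_left sum_subtractf algebra_simps power2_eq_square sum.distrib)
  also have "\<dots> = c * (\<Sum>j<N. (x j - x ((j+N-1) mod N))^2)"
  proof -
    have e1: "(\<Sum>j<N. (x j - x ((j+N-1) mod N))^2) = (\<Sum>j<N. (x j)^2) + (\<Sum>j<N. (x ((j+N-1) mod N))^2) - 2*(\<Sum>j<N. x ((j+N-1) mod N) * x j)"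
      by (simp add: power2_diff sum.distrib sum_subtractf sum_distrib_left algebra_simps)
    show ?thesis unfolding e1 s1 s2 by (simp add: algebra_simps)
  qed
  finally show ?thesis unfolding c_def .
qed

lemma dnorm: "(norm (1 - w N ^ k))^2 = 4*(sin(real k*pi/real N))^2"
proof -
  define t where "t = real k*pi/real N"
  have "(norm (1 - w N ^ k))^2 = (1 - cos (2*t))^2 + (sin (2*t))^2"
  proof -
    have a: "2*pi*real k/real N = 2*t" unfolding t_def by simp
    show ?thesis unfolding w_pow a by (simp add: cmod_power2)
  qed
  also have "\<dots> = 2 - 2 * cos (2*t)"
    by (simp add: power2_diff sin_squared_eq)
  also have "\<dots> = 4*(sin t)^2" by (simp add: cos_double_sin)
  finally show ?thesis unfolding t_def .
qed

lemma spos: assumes "k \<in> {1..<N}" shows "sin(real k*pi/real N) > 0"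
proof -
  have "real k < real N" "real k \<ge> 1" using assms by auto
  then have "real k * pi / real N < pi" "0 < real k * pi / real N"
    by (auto simp: field_simps)
  then show ?thesis by (intro sin_gt_zero)
qed

lemma key:
  fixes y :: "nat \<Rightarrow> real"
  assumes N: "N \<ge> 2" and j: "j < N" and y0: "(\<Sum>l<N. y l) = 0"
  shows "(real N)^2 * (y j)^2 \<le> real N * (\<Sum>l<N. (y l - y ((l+N-1) mod N))^2)
           * (\<Sum>k\<in>{1..<N}. 1/(4*(sin(real k*pi/real N))^2))"
proof -
  have N1: "N \<ge> 1" using N by simp
  define Y where "Y k = (\<Sum>l<N. complex_of_real (y l) * w N ^ (l*k))" for k
  define z where "z l = y l - y ((l+N-1) mod N)" for l
  define D where "D k = (\<Sum>l<N. complex_of_real (z l) * w N ^ (l*k))" for k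
  have inv: "of_nat N * complex_of_real (y j) = (\<Sum>k<N. Y k * cnj (w N) ^ (j*k))"
  proof -
    have "(\<Sum>k<N. Y k * cnj (w N) ^ (j*k)) = (\<Sum>k<N. \<Sum>l<N. complex_of_real (y l) * (w N ^ (l*k) * cnj (w N) ^ (j*k)))"
      unfolding Y_def by (simp add: sum_distrib_right mult.assoc)
    also have "\<dots> = (\<Sum>l<N. complex_of_real (y l) * (\<Sum>k<N. w N ^ (l*k) * cnj (w N) ^ (j*k)))"
      by (subst sum.swap) (simp add: sum_distrib_left)
    also have "\<dots> = (\<Sum>l<N. (if l = j then complex_of_real (y j) * of_nat N else 0))"
      by (intro sum.cong refl) (simp add: orth[OF N1 _ j])
    also have "\<dots> = of_nat N * complex_of_real (y j)" using j by (simp add: mult.commute)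
    finally show ?thesis by simp
  qed
  have Y0: "Y 0 = 0" unfolding Y_def using y0 by (simp flip: of_real_sum)
  have split: "{..<N} = insert 0 {1..<N}" using N by auto
  have inv': "of_nat N * complex_of_real (y j) = (\<Sum>k\<in>{1..<N}. Y k * cnj (w N) ^ (j*k))"
    using inv unfolding split by (simp add: Y0)
  have nw: "norm (w N) = 1" by (simp add: w_def)
  have bound1: "real N * \<bar>y j\<bar> \<le> (\<Sum>k\<in>{1..<N}. norm (Y k))"
  proof -
    have "real N * \<bar>y j\<bar> = norm (of_nat N * complex_of_real (y j))" by (simp add: norm_mult)
    also have "\<dots> = norm (\<Sum>k\<in>{1..<N}. Y k * cnj (w N) ^ (j*k))" by (simp only: inv')
    also have "\<dots> \<le> (\<Sum>k\<in>{1..<N}. norm (Y k * cnj (w N) ^ (j*k)))" by (rule norm_sum)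
    also have "\<dots> = (\<Sum>k\<in>{1..<N}. norm (Y k))" by (simp add: norm_mult norm_power nw)
    finally show ?thesis .
  qed
  have DY: "D k = (1 - w N ^ k) * Y k" for k
  proof -
    have sh: "(\<Sum>l<N. complex_of_real (y ((l+N-1) mod N)) * w N ^ (l*k)) = w N ^ k * Y k"
    proof -
      have "(\<Sum>l<N. complex_of_real (y ((l+N-1) mod N)) * w N ^ (l*k))
          = (\<Sum>l<N. (\<lambda>m. complex_of_real (y m) * w N ^ (((m+1) mod N)*k)) ((l+N-1) mod N))"
        by (intro sum.cong refl) (metis mod_pred_succ[OF N1] lessThan_iff)
      also have "\<dots> = (\<Sum>m<N. complex_of_real (y m) * w N ^ (((m+1) mod N)*k))" by (rule sum_shift[OF N1])
      also have "\<dots> = (\<Sum>m<N. complex_of_real (y m) * w N ^ ((m+1)*k))" by (simp only: w_pow_mod[OF N1])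
      also have "\<dots> = w N ^ k * Y k" unfolding Y_def
        by (simp add: sum_distrib_left power_add algebra_simps)
      finally show ?thesis .
    qed
    have "D k = Y k - (\<Sum>l<N. complex_of_real (y ((l+N-1) mod N)) * w N ^ (l*k))"
      unfolding D_def z_def Y_def by (simp add: sum_subtractf left_diff_distrib)
    then show ?thesis unfolding sh by (simp add: algebra_simps)
  qed
  have Pars: "(\<Sum>k<N. (norm (D k))^2) = real N * (\<Sum>l<N. (z l)^2)"
  proof -
    have cnjD: "cnj (D k) = (\<Sum>m<N. complex_of_real (z m) * cnj (w N) ^ (m*k))" for k
      unfolding D_def by (simp add: cnj_sum)
    have "complex_of_real (\<Sum>k<N. (norm (D k))^2) = (\<Sum>k<N. D k * cnj (D k))"
      unfolding of_real_sum by (intro sum.cong refl) (rule complex_norm_square)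
    also have "\<dots> = (\<Sum>k<N. \<Sum>l<N. \<Sum>m<N. complex_of_real (z l) * complex_of_real (z m) * (w N^(l*k) * cnj (w N)^(m*k)))"
      unfolding cnjD D_def by (simp add: sum_product algebra_simps)
    also have "\<dots> = (\<Sum>l<N. \<Sum>m<N. complex_of_real (z l) * complex_of_real (z m) * (\<Sum>k<N. w N^(l*k) * cnj (w N)^(m*k)))"
      by (subst sum.swap, rule sum.cong[OF refl], subst sum.swap, simp add: sum_distrib_left)
    also have "\<dots> = (\<Sum>l<N. \<Sum>m<N. (if m = l then complex_of_real (z l) * complex_of_real (z l) * of_nat N else 0))"
      by (intro sum.cong refl) (auto simp: orth[OF N1])
    also have "\<dots> = complex_of_real (real N * (\<Sum>l<N. (z l)^2))"
      by (simp add: sum_distrib_left power2_eq_square algebra_simps)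
    finally show ?thesis by (simp only: of_real_eq_iff)
  qed
  define d where "d k = norm (1 - w N ^ k)" for k
  have dpos: "d k > 0" if "k \<in> {1..<N}" for k
  proof -
    have "(d k)^2 > 0" unfolding d_def dnorm using spos[OF that] by simp
    then show ?thesis unfolding d_def by simp
  qed
  have "(real N * \<bar>y j\<bar>)^2 \<le> (\<Sum>k\<in>{1..<N}. norm (Y k))^2"
    using bound1 by (intro power_mono) auto
  also have "(\<Sum>k\<in>{1..<N}. norm (Y k)) = (\<Sum>k\<in>{1..<N}. (norm (Y k) * d k) * (1 / d k))"
    by (intro sum.cong refl) (use dpos in \<open>fastforce simp: field_simps\<close>)
  also have "(\<dots>)^2 \<le> (\<Sum>k\<in>{1..<N}. (norm (Y k) * d k)^2) * (\<Sum>k\<in>{1..<N}. (1 / d k)^2)"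
    by (rule Cauchy_Schwarz_ineq_sum)
  also have "(\<Sum>k\<in>{1..<N}. (norm (Y k) * d k)^2) = (\<Sum>k\<in>{1..<N}. (norm (D k))^2)"
    by (intro sum.cong refl) (simp add: DY d_def norm_mult)
  also have "(\<Sum>k\<in>{1..<N}. (1 / d k)^2) = (\<Sum>k\<in>{1..<N}. 1/(4*(sin(real k*pi/real N))^2))"
    by (intro sum.cong refl) (simp add: d_def dnorm power_one_over)
  also have "(\<Sum>k\<in>{1..<N}. (norm (D k))^2) \<le> (\<Sum>k<N. (norm (D k))^2)"
    by (rule sum_mono2) auto
  finally have "(real N * \<bar>y j\<bar>)^2 \<le> (\<Sum>k<N. (norm (D k))^2) * (\<Sum>k\<in>{1..<N}. 1/(4*(sin(real k*pi/real N))^2))"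
    by (simp add: mult_right_mono sum_nonneg)
  then show ?thesis unfolding Pars z_def by (simp add: power_mult_distrib)
qed

theorem lemma5p2:
  fixes \<mu> \<gamma> :: real
  assumes "\<mu> > 1"
    and "\<gamma> > 0"
    and "\<forall>N::nat. N \<ge> 1 \<longrightarrow> (\<Sum>k=1..N-1. 1 / nu \<mu> k N) \<le> \<gamma>"
  shows "\<forall>(N::nat) (x::nat \<Rightarrow> real). N \<ge> 1 \<longrightarrow>
           inner_N N x (KN \<mu> N x)
             \<ge> (1 / \<gamma>) * real N * (Max ((\<lambda>k. \<bar>x k - mean_N N x\<bar>) ` {..<N}))^2"
proof (intro allI impI)
  fix N :: nat and x :: "nat \<Rightarrow> real"
  assume N1: "N \<ge> 1"
  define c where "c = \<mu> / (4 * (sin (pi / real N))^2)"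
  define y where "y l = x l - mean_N N x" for l
  define M where "M = Max ((\<lambda>k. \<bar>x k - mean_N N x\<bar>) ` {..<N})"
  have inner: "inner_N N x (KN \<mu> N x) = c * (\<Sum>j<N. (x j - x ((j+N-1) mod N))^2)"
    unfolding c_def by (rule inner_K[OF N1])
  have "M \<in> (\<lambda>k. \<bar>x k - mean_N N x\<bar>) ` {..<N}" unfolding M_def
    using N1 by (intro Max_in) (auto simp: lessThan_empty_iff)
  then obtain j where j: "j < N" and Mj: "M = \<bar>y j\<bar>" unfolding y_def by auto
  show "inner_N N x (KN \<mu> N x) \<ge> (1 / \<gamma>) * real N * M^2"
  proof (cases "N = 1")
    case True
    then have "y j = 0" using j unfolding y_def mean_N_def by simp
    moreover have "inner_N N x (KN \<mu> N x) = 0" unfolding inner using True by simp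
    ultimately show ?thesis using Mj by simp
  next
    case False
    then have N2: "N \<ge> 2" using N1 by simp
    have y0: "(\<Sum>l<N. y l) = 0" unfolding y_def mean_N_def using N1
      by (simp add: sum_subtractf)
    have zz: "(\<Sum>l<N. (y l - y ((l+N-1) mod N))^2) = (\<Sum>j<N. (x j - x ((j+N-1) mod N))^2)"
      unfolding y_def by simp
    define T where "T = (\<Sum>k\<in>{1..<N}. 1/(4*(sin(real k*pi/real N))^2))"
    have s1: "sin (pi / real N) > 0" using spos[of 1 N] N2 by simp
    have mu0: "\<mu> > 0" using assms(1) by simp
    have cpos: "c > 0" unfolding c_def using s1 mu0 by simp
    have T: "T = c * (\<Sum>k=1..N-1. 1 / nu \<mu> k N)"
    proof -
      have "{1..N-1} = {1..<N}" using N1 by auto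
      then have "c * (\<Sum>k=1..N-1. 1 / nu \<mu> k N) = (\<Sum>k\<in>{1..<N}. c / nu \<mu> k N)"
        by (simp add: sum_distrib_left)
      also have "\<dots> = T" unfolding T_def
      proof (intro sum.cong refl)
        fix k assume k: "k \<in> {1..<N}"
        have "sin (real k * pi / real N) > 0" by (rule spos[OF k])
        then show "c / nu \<mu> k N = 1/(4*(sin(real k*pi/real N))^2)"
          unfolding c_def nu_def using s1 mu0 by (simp add: field_simps)
      qed
      finally show ?thesis by simp
    qed
    have Tle: "T \<le> c * \<gamma>" unfolding T using assms(3) N1 cpos by (simp add: mult_left_mono)
    have I0: "inner_N N x (KN \<mu> N x) \<ge> 0" unfolding inner using cpos by (simp add: sum_nonneg)
    have "(real N)^2 * (y j)^2 \<le> real N * (\<Sum>j<N. (x j - x ((j+N-1) mod N))^2) * T"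
      using key[OF N2 j y0] unfolding zz T_def .
    also have "\<dots> \<le> real N * (\<Sum>j<N. (x j - x ((j+N-1) mod N))^2) * (c * \<gamma>)"
      using Tle by (intro mult_left_mono) (auto simp: sum_nonneg)
    also have "\<dots> = real N * \<gamma> * inner_N N x (KN \<mu> N x)" unfolding inner by simp
    finally have "real N * (real N * (y j)^2) \<le> real N * (\<gamma> * inner_N N x (KN \<mu> N x))"
      by (simp add: power2_eq_square algebra_simps)
    then have "real N * (y j)^2 \<le> \<gamma> * inner_N N x (KN \<mu> N x)"
      using N1 by (simp add: mult_le_cancel_left)
    then show ?thesis using Mj assms(2) by (simp add: field_simps)
  qed
qed

end
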